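(* Let $(T_0,\widetilde T_0)$ be a joint pair of closed abstract Friedrichs operators on a complex Hilbert space $\mathcal{H}$, with $T_1:=\widetilde T_0^*$, $\widetilde T_1:=T_0^*$, $\mathcal{W}_0:=\operatorname{dom}T_0=\operatorname{dom}\widetilde T_0$ and $\mathcal{W}:=\operatorname{dom}T_1=\operatorname{dom}\widetilde T_1$ equipped with the graph norm of $T_1$. Let $\mathcal{V}$ be a closed subspace of $\mathcal{W}$ with $\mathcal{W}_0\subseteq\mathcal{V}$. Then $T_1|_{\mathcal{V}}:\mathcal{V}\to\mathcal{H}$ is bijective if and only if $\mathcal{V}\dotplus\operatorname{ker}T_1=\mathcal{W}$ (i.e. $\mathcal{V}\cap\operatorname{ker}T_1=\{0\}$ and $\mathcal{V}+\operatorname{ker}T_1=\mathcal{W}$).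
   Context: $\mathcal{H}$ is a complex Hilbert space with inner product $\langle\cdot,\cdot\rangle$ and norm $\|\cdot\|$. A pair $(T,\widetilde T)$ of densely defined linear operators on $\mathcal{H}$ is a joint pair of abstract Friedrichs operators if: (T1) $T$ and $\widetilde T$ have a common dense domain $\mathcal{D}$ and $\langle T\varphi,\psi\rangle=\langle\varphi,\widetilde T\psi\rangle$ for all $\varphi,\psi\in\mathcal{D}$; (T2) there is $c>0$ with $\|(T+\widetilde T)\varphi\|\le c\|\varphi\|$ for all $\varphi\in\mathcal{D}$; (T3) there is $\mu_0>0$ with $\langle (T+\widetilde T)\varphi,\varphi\rangle\ge 2\mu_0\|\varphi\|^2$ for all $\varphi\in\mathcal{D}$. A joint pair of closed abstract Friedrichs operators is such a pair $(T_0,\widetilde T_0)$ in which both operators are closed. One has $T_0\subseteq T_1$, $\widetilde T_0\subseteq\widetilde T_1$ and $\operatorname{dom}T_1=\operatorname{dom}\widetilde T_1$. *)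

theory Defs
  imports "HOL-Analysis.Analysis"
begin

text \<open>A complex Hilbert space is modelled on a real Banach space type 'a, together with
  a complex scalar multiplication sc (extending scaleR) and a complex inner product ip
  (linear in the first argument, conjugate symmetric) inducing the norm.  Completeness
  comes from the class banach.\<close>

definition chilbert :: "(complex \<Rightarrow> 'a::banach \<Rightarrow> 'a) \<Rightarrow> ('a \<Rightarrow> 'a \<Rightarrow> complex) \<Rightarrow> bool" where
  "chilbert sc ip \<longleftrightarrow>
     (\<forall>r x. sc (complex_of_real r) x = scaleR r x) \<and>
     (\<forall>a b x. sc (a * b) x = sc a (sc b x)) \<and>
     (\<forall>a b x. sc (a + b) x = sc a x + sc b x) \<and>
     (\<forall>a x y. sc a (x + y) = sc a x + sc a y) \<and>
     (\<forall>x y z. ip (x + y) z = ip x z + ip y z) \<and>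
     (\<forall>a x y. ip (sc a x) y = a * ip x y) \<and>
     (\<forall>x y. ip y x = cnj (ip x y)) \<and>
     (\<forall>x. Im (ip x x) = 0 \<and> Re (ip x x) \<ge> 0 \<and> norm x = sqrt (Re (ip x x)))"

definition csubspace :: "(complex \<Rightarrow> 'a::banach \<Rightarrow> 'a) \<Rightarrow> 'a set \<Rightarrow> bool" where
  "csubspace sc S \<longleftrightarrow> 0 \<in> S \<and> (\<forall>x\<in>S. \<forall>y\<in>S. x + y \<in> S) \<and> (\<forall>a. \<forall>x\<in>S. sc a x \<in> S)"

definition clinear_op :: "(complex \<Rightarrow> 'a::banach \<Rightarrow> 'a) \<Rightarrow> 'a set \<Rightarrow> ('a \<Rightarrow> 'a) \<Rightarrow> bool" where
  "clinear_op sc D T \<longleftrightarrow> csubspace sc D \<and>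
     (\<forall>x\<in>D. \<forall>y\<in>D. T (x + y) = T x + T y) \<and> (\<forall>a. \<forall>x\<in>D. T (sc a x) = sc a (T x))"

definition closed_op :: "'a::banach set \<Rightarrow> ('a \<Rightarrow> 'a) \<Rightarrow> bool" where
  "closed_op D T \<longleftrightarrow> closed {(x, T x) | x. x \<in> D}"

definition adj_dom :: "('a::banach \<Rightarrow> 'a \<Rightarrow> complex) \<Rightarrow> 'a set \<Rightarrow> ('a \<Rightarrow> 'a) \<Rightarrow> 'a set" where
  "adj_dom ip D T = {y. \<exists>z. \<forall>x\<in>D. ip (T x) y = ip x z}"

definition adj_op :: "('a::banach \<Rightarrow> 'a \<Rightarrow> complex) \<Rightarrow> 'a set \<Rightarrow> ('a \<Rightarrow> 'a) \<Rightarrow> 'a \<Rightarrow> 'a" where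
  "adj_op ip D T y = (THE z. \<forall>x\<in>D. ip (T x) y = ip x z)"

definition joint_AFO :: "(complex \<Rightarrow> 'a::banach \<Rightarrow> 'a) \<Rightarrow> ('a \<Rightarrow> 'a \<Rightarrow> complex)
    \<Rightarrow> 'a set \<Rightarrow> ('a \<Rightarrow> 'a) \<Rightarrow> ('a \<Rightarrow> 'a) \<Rightarrow> bool" where
  "joint_AFO sc ip D T Tt \<longleftrightarrow>
     closure D = UNIV \<and> clinear_op sc D T \<and> clinear_op sc D Tt \<and>
     (\<forall>x\<in>D. \<forall>y\<in>D. ip (T x) y = ip x (Tt y)) \<and>
     (\<exists>c>0. \<forall>x\<in>D. norm (T x + Tt x) \<le> c * norm x) \<and>
     (\<exists>\<mu>0>0. \<forall>x\<in>D. Im (ip (T x + Tt x) x) = 0 \<and> Re (ip (T x + Tt x) x) \<ge> 2 * \<mu>0 * (norm x)\<^sup>2)"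

definition graph_norm :: "('a::banach \<Rightarrow> 'a) \<Rightarrow> 'a \<Rightarrow> real" where
  "graph_norm T x = sqrt ((norm x)\<^sup>2 + (norm (T x))\<^sup>2)"

definition graph_closed_in :: "('a::banach \<Rightarrow> 'a) \<Rightarrow> 'a set \<Rightarrow> 'a set \<Rightarrow> bool" where
  "graph_closed_in T W V \<longleftrightarrow>
     (\<forall>v w. (\<forall>n. v n \<in> V) \<and> w \<in> W \<and> (\<lambda>n. graph_norm T (v n - w)) \<longlonglongrightarrow> 0 \<longrightarrow> w \<in> V)"

end

theory Submission
  imports Defs
begin

locale chs =
  fixes sc :: "complex \<Rightarrow> 'a::banach \<Rightarrow> 'a" and ip :: "'a \<Rightarrow> 'a \<Rightarrow> complex"
  assumes H: "chilbert sc ip"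
begin

lemma sc_real: "sc (complex_of_real r) x = r *\<^sub>R x"
  using H unfolding chilbert_def by blast
lemma sc_minus_one: "sc (-1) x = - x"
  using sc_real[of "-1" x] by simp
lemma ip_add_left: "ip (x + y) z = ip x z + ip y z"
  using H unfolding chilbert_def by blast
lemma ip_sc_left: "ip (sc a x) y = a * ip x y"
  using H unfolding chilbert_def by blast
lemma ip_cnj: "ip y x = cnj (ip x y)"
  using H unfolding chilbert_def by blast
lemma ip_self_Im: "Im (ip x x) = 0"
  using H unfolding chilbert_def by blast
lemma ip_self_Re: "Re (ip x x) = (norm x)^2"
proof -
  have "Re (ip x x) \<ge> 0 \<and> norm x = sqrt (Re (ip x x))"
    using H unfolding chilbert_def by blast
  then show ?thesis by simp
qed
lemma ip_add_right: "ip x (y + z) = ip x y + ip x z"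
  by (metis ip_cnj ip_add_left complex_cnj_add)
lemma ip_zero_left[simp]: "ip 0 y = 0"
  using ip_add_left[of 0 0 y] by simp
lemma ip_zero_right[simp]: "ip y 0 = 0"
  using ip_cnj[of 0 y] by simp
lemma ip_minus_left: "ip (- x) y = - ip x y"
proof -
  have "ip x y + ip (-x) y = 0" using ip_add_left[of x "-x" y] by simp
  then show ?thesis by (metis add.commute eq_neg_iff_add_eq_0)
qed
lemma ip_minus_right: "ip y (- x) = - ip y x"
  by (metis ip_cnj ip_minus_left complex_cnj_minus)
lemma ip_diff_left: "ip (x - y) z = ip x z - ip y z"
  using ip_add_left[of x "-y" z] ip_minus_left[of y z] by simp
lemma ip_diff_right: "ip z (x - y) = ip z x - ip z y"
  using ip_add_right[of z x "-y"] ip_minus_right[of z y] by simp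
lemma ip_scaleR_left: "ip (r *\<^sub>R x) y = complex_of_real r * ip x y"
  by (metis sc_real ip_sc_left)
lemma ip_scaleR_right: "ip y (r *\<^sub>R x) = complex_of_real r * ip y x"
  by (metis ip_cnj ip_scaleR_left complex_cnj_mult complex_cnj_complex_of_real)
lemma Re_ip_sym: "Re (ip y x) = Re (ip x y)"
  by (subst ip_cnj) simp
lemma norm_add_sq: "(norm (x + y))^2 = (norm x)^2 + 2 * Re (ip x y) + (norm y)^2"
proof -
  have "(norm (x + y))^2 = Re (ip (x+y) (x+y))" by (simp add: ip_self_Re)
  also have "\<dots> = Re (ip x x) + Re (ip x y) + Re (ip y x) + Re (ip y y)"
    by (simp add: ip_add_left ip_add_right)
  finally show ?thesis by (simp add: ip_self_Re Re_ip_sym[of y x])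
qed
lemma norm_diff_sq: "(norm (x - y))^2 = (norm x)^2 - 2 * Re (ip x y) + (norm y)^2"
  using norm_add_sq[of x "-y"] by (simp add: ip_minus_right)
lemma CS: "\<bar>Re (ip x y)\<bar> \<le> norm x * norm y"
proof -
  have a: "norm (x + y) \<le> norm x + norm y" by (rule norm_triangle_ineq)
  have b: "norm (x - y) \<le> norm x + norm y" by (rule norm_triangle_ineq4)
  have c: "\<bar>norm x - norm y\<bar> \<le> norm (x - y)" by (rule norm_triangle_ineq3)
  have d: "\<bar>norm x - norm y\<bar> \<le> norm (x + y)" using norm_triangle_ineq3[of x "-y"] by simp
  have a2: "(norm (x + y))^2 \<le> (norm x + norm y)^2" using a by (simp add: power_mono)
  have b2: "(norm (x - y))^2 \<le> (norm x + norm y)^2" using b by (simp add: power_mono)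
  have c2: "(norm x - norm y)^2 \<le> (norm (x - y))^2" using c power_mono[OF c, of 2] by simp
  have d2: "(norm x - norm y)^2 \<le> (norm (x + y))^2" using d power_mono[OF d, of 2] by simp
  have e: "4 * Re (ip x y) = (norm (x + y))^2 - (norm (x - y))^2"
    using norm_add_sq[of x y] norm_diff_sq[of x y] by linarith
  have f: "(norm x + norm y)^2 - (norm x - norm y)^2 = 4 * (norm x * norm y)"
    by (simp add: power2_eq_square algebra_simps)
  have "Re (ip x y) \<le> norm x * norm y" "- Re (ip x y) \<le> norm x * norm y"
    using a2 b2 c2 d2 e f by linarith+
  then show ?thesis by linarith
qed
lemma bl: "bounded_linear (\<lambda>x. Re (ip x b))"
proof (rule bounded_linear_intro[where K="norm b"])
  show "Re (ip (x + y) b) = Re (ip x b) + Re (ip y b)" for x y by (simp add: ip_add_left)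
  show "Re (ip (r *\<^sub>R x) b) = r *\<^sub>R Re (ip x b)" for r x by (simp add: ip_scaleR_left)
  show "norm (Re (ip x b)) \<le> norm x * norm b" for x using CS[of x b] by simp
qed


lemma uniq:
  assumes dense: "closure W0 = UNIV" and h: "\<forall>x\<in>W0. ip x d = 0"
  shows "d = 0"
proof -
  have "d \<in> closure W0" using dense by simp
  then obtain xs where xs: "\<forall>n. xs n \<in> W0" "xs \<longlonglongrightarrow> d"
    using closure_sequential by blast
  have "(\<lambda>n. Re (ip (xs n) d)) \<longlonglongrightarrow> Re (ip d d)"
    by (rule bounded_linear.tendsto[OF bl xs(2)])
  moreover have "(\<lambda>n. Re (ip (xs n) d)) = (\<lambda>n. 0)" using xs(1) h by simp
  ultimately have "(\<lambda>n. 0) \<longlonglongrightarrow> Re (ip d d)" by simp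
  then have "Re (ip d d) = 0" by (metis LIMSEQ_unique tendsto_const)
  then show ?thesis by (simp add: ip_self_Re)
qed

lemma adj_eq:
  assumes dense: "closure W0 = UNIV" and h: "\<forall>x\<in>W0. ip (Tt x) w = ip x z"
  shows "w \<in> adj_dom ip W0 Tt \<and> adj_op ip W0 Tt w = z"
proof
  show "w \<in> adj_dom ip W0 Tt" unfolding adj_dom_def using h by blast
  show "adj_op ip W0 Tt w = z" unfolding adj_op_def
  proof (rule the_equality)
    show "\<forall>x\<in>W0. ip (Tt x) w = ip x z" by fact
    fix z' assume h': "\<forall>x\<in>W0. ip (Tt x) w = ip x z'"
    have "\<forall>x\<in>W0. ip x (z' - z) = 0"
    proof
      fix x assume "x \<in> W0"
      then have "ip x z' = ip x z" using h h' by metis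
      then show "ip x (z' - z) = 0" by (simp add: ip_diff_right)
    qed
    then have "z' - z = 0" by (rule uniq[OF dense])
    then show "z' = z" by simp
  qed
qed

lemma adj_prop:
  assumes dense: "closure W0 = UNIV" and w: "w \<in> adj_dom ip W0 Tt"
  shows "\<forall>x\<in>W0. ip (Tt x) w = ip x (adj_op ip W0 Tt w)"
proof -
  obtain z where z: "\<forall>x\<in>W0. ip (Tt x) w = ip x z" using w unfolding adj_dom_def by blast
  then show ?thesis using adj_eq[OF dense z] by simp
qed

lemma adj_add:
  assumes dense: "closure W0 = UNIV" and w: "w1 \<in> adj_dom ip W0 Tt" "w2 \<in> adj_dom ip W0 Tt"
  shows "w1 + w2 \<in> adj_dom ip W0 Tt \<and>
    adj_op ip W0 Tt (w1 + w2) = adj_op ip W0 Tt w1 + adj_op ip W0 Tt w2"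
  by (rule adj_eq[OF dense]) (use adj_prop[OF dense w(1)] adj_prop[OF dense w(2)] in \<open>simp add: ip_add_right\<close>)

lemma adj_minus:
  assumes dense: "closure W0 = UNIV" and w: "w \<in> adj_dom ip W0 Tt"
  shows "- w \<in> adj_dom ip W0 Tt \<and> adj_op ip W0 Tt (- w) = - adj_op ip W0 Tt w"
  by (rule adj_eq[OF dense]) (use adj_prop[OF dense w] in \<open>simp add: ip_minus_right\<close>)

lemma adj_diff:
  assumes dense: "closure W0 = UNIV" and w: "w1 \<in> adj_dom ip W0 Tt" "w2 \<in> adj_dom ip W0 Tt"
  shows "w1 - w2 \<in> adj_dom ip W0 Tt \<and>
    adj_op ip W0 Tt (w1 - w2) = adj_op ip W0 Tt w1 - adj_op ip W0 Tt w2"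
  using adj_add[OF dense w(1) adj_minus[OF dense w(2), THEN conjunct1]] adj_minus[OF dense w(2)]
  by simp

lemma adj_zero:
  assumes dense: "closure W0 = UNIV"
  shows "0 \<in> adj_dom ip W0 Tt \<and> adj_op ip W0 Tt 0 = 0"
  by (rule adj_eq[OF dense]) simp


lemma quad:
  fixes D c :: real
  assumes h: "\<And>t. 0 \<le> t * D + t^2 * c"
  shows "D = 0"
proof (cases "c \<le> 0")
  case True
  have "0 \<le> (-D) * D + (-D)^2 * c" by (rule h)
  moreover have "(-D)^2 * c \<le> 0" using True by (simp add: mult_nonneg_nonpos)
  ultimately have "D * D \<le> 0" by simp
  then show ?thesis by (metis mult_eq_0_iff not_square_less_zero order_antisym_conv zero_le_square)
next
  case False
  then have c: "c > 0" by simp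
  have "0 \<le> (-D/(2*c)) * D + (-D/(2*c))^2 * c" by (rule h)
  also have "\<dots> = - (D * D) / (4 * c)" using c by (simp add: power2_eq_square field_simps)
  finally have "D * D \<le> 0" using c by (simp add: divide_le_0_iff)
  then show ?thesis by (metis mult_eq_0_iff not_square_less_zero order_antisym_conv zero_le_square)
qed

lemma arith1:
  fixes m Y R An Rn Ak Rk N Dd i1 i2 :: real
  shows "m \<le> Y/2 - R \<Longrightarrow> An/2 - Rn < m + i1 \<Longrightarrow> Ak/2 - Rk < m + i2 \<Longrightarrow>
    N + Dd = 2*An + 2*Ak \<Longrightarrow> R = (Rn+Rk)/2 \<Longrightarrow> Y = N/4 \<Longrightarrow> Dd \<le> 4*(i1+i2)"
  unfolding distrib_left add_divide_distrib by linarith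

lemma surj_aux:
  assumes W0: "csubspace sc W0"
    and lin_add: "\<And>x y. x \<in> W0 \<Longrightarrow> y \<in> W0 \<Longrightarrow> Tt (x + y) = Tt x + Tt y"
    and lin_sc: "\<And>a x. x \<in> W0 \<Longrightarrow> Tt (sc a x) = sc a (Tt x)"
    and mu: "\<mu> > 0" and bd: "\<And>x. x \<in> W0 \<Longrightarrow> \<mu> * norm x \<le> norm (Tt x)"
  shows "\<exists>w. \<forall>x\<in>W0. ip (Tt x) w = ip x f"
proof -
  have W0_0: "0 \<in> W0" using W0 unfolding csubspace_def by blast
  have W0_add: "\<And>x y. x \<in> W0 \<Longrightarrow> y \<in> W0 \<Longrightarrow> x + y \<in> W0" using W0 unfolding csubspace_def by blast
  have W0_sc: "\<And>a x. x \<in> W0 \<Longrightarrow> sc a x \<in> W0" using W0 unfolding csubspace_def by blast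
  have W0_sR: "\<And>r x. x \<in> W0 \<Longrightarrow> r *\<^sub>R x \<in> W0" using W0_sc sc_real by metis
  have Tt_sR: "\<And>r x. x \<in> W0 \<Longrightarrow> Tt (r *\<^sub>R x) = r *\<^sub>R Tt x" using lin_sc sc_real by metis
  define J where "J x = (norm (Tt x))^2 / 2 - Re (ip x f)" for x
  define K where "K = norm f / \<mu>"
  have Jlb: "- (K^2) / 2 \<le> J x" if x: "x \<in> W0" for x
  proof -
    have "Re (ip x f) \<le> norm x * norm f" using CS[of x f] by linarith
    also have "\<dots> \<le> (norm (Tt x) / \<mu>) * norm f"
      using bd[OF x] mu by (intro mult_right_mono) (simp_all add: field_simps)
    also have "\<dots> = norm (Tt x) * K" by (simp add: K_def)
    finally have 1: "Re (ip x f) \<le> norm (Tt x) * K" .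
    have 2: "0 \<le> (norm (Tt x) - K)^2" by simp
    have 3: "(norm (Tt x) - K)^2 = (norm (Tt x))^2 - 2 * (norm (Tt x) * K) + K^2"
      by (simp add: power2_eq_square algebra_simps)
    show ?thesis unfolding J_def using 1 2 3 by linarith
  qed
  define m where "m = Inf (J ` W0)"
  have bdd: "bdd_below (J ` W0)" unfolding bdd_below_def using Jlb by blast
  have mle: "m \<le> J x" if "x \<in> W0" for x
    unfolding m_def by (rule cInf_lower) (use that bdd in auto)
  have "\<exists>x\<in>W0. J x < m + inverse (real (Suc n))" for n
  proof -
    have "Inf (J ` W0) < m + inverse (real (Suc n))" unfolding m_def by simp
    then obtain y where "y \<in> J ` W0" "y < m + inverse (real (Suc n))"
      using cInf_lessD[of "J ` W0"] W0_0 by blast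
    then show ?thesis by blast
  qed
  then obtain xs where xs: "\<And>n. xs n \<in> W0" and xsJ: "\<And>n. J (xs n) < m + inverse (real (Suc n))"
    by metis
  define a where "a n = Tt (xs n)" for n
  have par: "(norm (a n - a k))^2 \<le> 4 * (inverse (real (Suc n)) + inverse (real (Suc k)))" for n k
  proof -
    define y where "y = (1/2) *\<^sub>R (xs n + xs k)"
    have y: "y \<in> W0" unfolding y_def using xs W0_add W0_sR by blast
    have Ty: "Tt y = (1/2) *\<^sub>R (a n + a k)" unfolding y_def a_def using xs lin_add Tt_sR W0_add by simp
    have Ny: "norm (Tt y) = norm (a n + a k) / 2" unfolding Ty by simp
    have Ny2: "(norm (Tt y))^2 = (norm (a n + a k))^2 / 4" unfolding Ny by (simp add: power_divide)
    have Rey: "Re (ip y f) = (Re (ip (xs n) f) + Re (ip (xs k) f)) / 2"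
      unfolding y_def by (simp add: ip_scaleR_left ip_add_left)
    have pl: "(norm (a n + a k))^2 + (norm (a n - a k))^2 = 2 * (norm (a n))^2 + 2 * (norm (a k))^2"
      using norm_add_sq[of "a n" "a k"] norm_diff_sq[of "a n" "a k"] by linarith
    have "m \<le> J y" using mle y .
    then show ?thesis using xsJ[of n] xsJ[of k] pl Rey Ny2 unfolding J_def a_def
      by (rule arith1)
  qed
  have "Cauchy a"
  proof (rule CauchyI)
    fix e :: real assume e: "0 < e"
    obtain M where M: "inverse (real (Suc M)) < e^2 / 8"
      using reals_Archimedean[of "e^2/8"] e by auto
    have "norm (a p - a q) < e" if "p \<ge> M" "q \<ge> M" for p q
    proof -
      have ip: "inverse (real (Suc p)) \<le> inverse (real (Suc M))" using that by (simp add: field_simps)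
      have iq: "inverse (real (Suc q)) \<le> inverse (real (Suc M))" using that by (simp add: field_simps)
      have "(norm (a p - a q))^2 < e^2" using par[of p q] ip iq M unfolding distrib_left by linarith
      then show ?thesis using e by (simp add: power_less_imp_less_base)
    qed
    then show "\<exists>M. \<forall>m\<ge>M. \<forall>n\<ge>M. norm (a m - a n) < e" by blast
  qed
  then obtain w where lim: "a \<longlonglongrightarrow> w" using Cauchy_convergent convergent_def by blast
  have Jlim: "(\<lambda>n. J (xs n)) \<longlonglongrightarrow> m"
  proof (rule tendsto_sandwich[of "\<lambda>n. m" _ _ "\<lambda>n. m + inverse (real (Suc n))"])
    show "\<forall>\<^sub>F n in sequentially. m \<le> J (xs n)" using mle xs by simp
    show "\<forall>\<^sub>F n in sequentially. J (xs n) \<le> m + inverse (real (Suc n))" using xsJ by (intro always_eventually allI less_imp_le)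
    show "(\<lambda>n. m) \<longlonglongrightarrow> m" by simp
    show "(\<lambda>n. m + inverse (real (Suc n))) \<longlonglongrightarrow> m" by (rule LIMSEQ_inverse_real_of_nat_add)
  qed
  have EL: "Re (ip (Tt h) w) = Re (ip h f)" if h: "h \<in> W0" for h
  proof -
    define b where "b = Tt h"
    define D where "D = Re (ip w b) - Re (ip h f)"
    define c where "c = (norm b)^2 / 2"
    have R: "(\<lambda>n. Re (ip (a n) b)) \<longlonglongrightarrow> Re (ip w b)"
      by (rule bounded_linear.tendsto[OF bl lim])
    have "0 \<le> t * D + t^2 * c" for t
    proof -
      have ex: "J (xs n + t *\<^sub>R h) = J (xs n) + t * (Re (ip (a n) b) - Re (ip h f)) + t^2 * c" for n
      proof -
        have "Tt (xs n + t *\<^sub>R h) = a n + t *\<^sub>R b"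
          using xs W0_sR h lin_add Tt_sR unfolding a_def b_def by simp
        then have 1: "(norm (Tt (xs n + t *\<^sub>R h)))^2 = (norm (a n))^2 + 2 * (t * Re (ip (a n) b)) + t^2 * (norm b)^2"
          by (simp add: norm_add_sq ip_scaleR_right power_mult_distrib)
        have 2: "Re (ip (xs n + t *\<^sub>R h) f) = Re (ip (xs n) f) + t * Re (ip h f)"
          by (simp add: ip_add_left ip_scaleR_left)
        show ?thesis unfolding J_def c_def using 1 2 unfolding a_def by (simp add: algebra_simps)
      qed
      have ge: "m \<le> J (xs n) + t * (Re (ip (a n) b) - Re (ip h f)) + t^2 * c" for n
        using mle[OF W0_add[OF xs[of n] W0_sR[of h t, OF h]]] ex[of n] by simp
      have L: "(\<lambda>n. J (xs n) + t * (Re (ip (a n) b) - Re (ip h f)) + t^2 * c)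
          \<longlonglongrightarrow> m + t * (Re (ip w b) - Re (ip h f)) + t^2 * c"
        by (intro tendsto_add tendsto_mult tendsto_diff tendsto_const Jlim R)
      have "m \<le> m + t * (Re (ip w b) - Re (ip h f)) + t^2 * c"
        by (rule LIMSEQ_le_const[OF L]) (use ge in blast)
      then show ?thesis unfolding D_def by simp
    qed
    then have "D = 0" by (rule quad)
    then show ?thesis unfolding D_def b_def using Re_ip_sym by simp
  qed
  show ?thesis
  proof (intro exI ballI)
    fix x assume x: "x \<in> W0"
    have 1: "Re (ip (Tt x) w) = Re (ip x f)" by (rule EL[OF x])
    have 2: "Re (ip (Tt (sc \<i> x)) w) = Re (ip (sc \<i> x) f)" by (rule EL[OF W0_sc[OF x]])
    then have "Im (ip (Tt x) w) = Im (ip x f)" using lin_sc[OF x] by (simp add: ip_sc_left)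
    then show "ip (Tt x) w = ip x f" using 1 by (simp add: complex_eq_iff)
  qed
qed

lemma fr_bound:
  assumes "joint_AFO sc ip W0 T0 Tt0"
  shows "\<exists>\<mu>>0. \<forall>x\<in>W0. \<mu> * norm x \<le> norm (Tt0 x)"
proof -
  have adj: "\<forall>x\<in>W0. \<forall>y\<in>W0. ip (T0 x) y = ip x (Tt0 y)" using assms unfolding joint_AFO_def by blast
  obtain \<mu>0 where mu: "\<mu>0 > 0" and co: "\<forall>x\<in>W0. Re (ip (T0 x + Tt0 x) x) \<ge> 2 * \<mu>0 * (norm x)^2"
    using assms unfolding joint_AFO_def by blast
  have "\<mu>0 * norm x \<le> norm (Tt0 x)" if x: "x \<in> W0" for x
  proof -
    have "Re (ip (T0 x) x) = Re (ip x (Tt0 x))" using adj x by simp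
    also have "\<dots> = Re (ip (Tt0 x) x)" by (rule Re_ip_sym)
    finally have e: "Re (ip (T0 x + Tt0 x) x) = 2 * Re (ip (Tt0 x) x)" by (simp add: ip_add_left)
    have "Re (ip (Tt0 x) x) \<le> norm (Tt0 x) * norm x" using CS[of "Tt0 x" x] by linarith
    moreover have "2 * \<mu>0 * (norm x)^2 \<le> Re (ip (T0 x + Tt0 x) x)" using co x by blast
    ultimately have "\<mu>0 * (norm x)^2 \<le> norm (Tt0 x) * norm x" using e by linarith
    then have q: "\<mu>0 * norm x * norm x \<le> norm (Tt0 x) * norm x"
      by (simp add: power2_eq_square mult.assoc)
    show ?thesis
    proof (cases "x = 0")
      case True then show ?thesis by simp
    next
      case False then have "norm x > 0" by simp
      then show ?thesis using q by (simp add: mult_le_cancel_right_pos)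
    qed
  qed
  then show ?thesis using mu by blast
qed

end

theorem lemma3p10:
  fixes sc :: "complex \<Rightarrow> 'a::banach \<Rightarrow> 'a" and ip :: "'a \<Rightarrow> 'a \<Rightarrow> complex"
    and W0 V :: "'a set" and T0 Tt0 :: "'a \<Rightarrow> 'a"
  assumes "chilbert sc ip"
    and "joint_AFO sc ip W0 T0 Tt0"
    and "closed_op W0 T0" and "closed_op W0 Tt0"
    and "csubspace sc V"
    and "V \<subseteq> adj_dom ip W0 Tt0"
    and "W0 \<subseteq> V"
    and "graph_closed_in (adj_op ip W0 Tt0) (adj_dom ip W0 Tt0) V"
  shows "bij_betw (adj_op ip W0 Tt0) V UNIV \<longleftrightarrow>
    (V \<inter> {w \<in> adj_dom ip W0 Tt0. adj_op ip W0 Tt0 w = 0} = {0} \<and>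
     {v + k | v k. v \<in> V \<and> k \<in> {w \<in> adj_dom ip W0 Tt0. adj_op ip W0 Tt0 w = 0}}
       = adj_dom ip W0 Tt0)"
proof -
  interpret chs sc ip by unfold_locales (rule assms(1))
  let ?W = "adj_dom ip W0 Tt0" and ?T = "adj_op ip W0 Tt0"
  note jd = assms(2)[unfolded joint_AFO_def]
  have dense: "closure W0 = UNIV" by (rule conjunct1[OF jd])
  have cl: "clinear_op sc W0 Tt0" by (rule conjunct1[OF conjunct2[OF conjunct2[OF jd]]])
  have W0s: "csubspace sc W0" using cl unfolding clinear_op_def by blast
  have ladd: "\<And>x y. x \<in> W0 \<Longrightarrow> y \<in> W0 \<Longrightarrow> Tt0 (x + y) = Tt0 x + Tt0 y"
    using cl unfolding clinear_op_def by blast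
  have lsc: "\<And>a x. x \<in> W0 \<Longrightarrow> Tt0 (sc a x) = sc a (Tt0 x)"
    using cl unfolding clinear_op_def by blast
  obtain \<mu> where mu: "\<mu> > 0" "\<forall>x\<in>W0. \<mu> * norm x \<le> norm (Tt0 x)"
    using fr_bound[OF assms(2)] by blast
  have surjT: "\<exists>w\<in>?W. ?T w = f" for f
  proof -
    have bd: "\<And>x. x \<in> W0 \<Longrightarrow> \<mu> * norm x \<le> norm (Tt0 x)" using mu(2) by blast
    obtain w where "\<forall>x\<in>W0. ip (Tt0 x) w = ip x f"
      using surj_aux[OF W0s ladd lsc mu(1) bd] by blast
    then have "w \<in> ?W \<and> ?T w = f" by (rule adj_eq[OF dense])
    then show ?thesis by blast
  qed
  have V0: "0 \<in> V" using assms(5) unfolding csubspace_def by blast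
  have Vadd: "\<And>x y. x \<in> V \<Longrightarrow> y \<in> V \<Longrightarrow> x + y \<in> V" using assms(5) unfolding csubspace_def by blast
  have Vsc: "\<And>a x. x \<in> V \<Longrightarrow> sc a x \<in> V" using assms(5) unfolding csubspace_def by blast
  have Vdiff: "x - y \<in> V" if "x \<in> V" "y \<in> V" for x y
  proof -
    have "sc (-1) y \<in> V" by (rule Vsc[OF that(2)])
    then have my: "- y \<in> V" by (simp only: sc_minus_one)
    have "x + - y \<in> V" by (rule Vadd[OF that(1) my])
    then show ?thesis by (simp only: diff_conv_add_uminus)
  qed
  have VW: "V \<subseteq> ?W" by (rule assms(6))
  note z = adj_zero[OF dense, of Tt0]
  show ?thesis
  proof
    assume bij: "bij_betw ?T V UNIV"
    then have inj: "inj_on ?T V" and img: "?T ` V = UNIV" by (auto simp: bij_betw_def)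
    show "V \<inter> {w \<in> ?W. ?T w = 0} = {0} \<and> {v + k | v k. v \<in> V \<and> k \<in> {w \<in> ?W. ?T w = 0}} = ?W"
    proof
      show "V \<inter> {w \<in> ?W. ?T w = 0} = {0}"
      proof
        show "V \<inter> {w \<in> ?W. ?T w = 0} \<subseteq> {0}"
        proof
          fix v assume "v \<in> V \<inter> {w \<in> ?W. ?T w = 0}"
          then have "v \<in> V" "?T v = ?T 0" using z by auto
          then have "v = 0" using inj V0 by (meson inj_onD)
          then show "v \<in> {0}" by simp
        qed
        show "{0} \<subseteq> V \<inter> {w \<in> ?W. ?T w = 0}" using V0 z by auto
      qed
      show "{v + k | v k. v \<in> V \<and> k \<in> {w \<in> ?W. ?T w = 0}} = ?W"
      proof
        show "{v + k | v k. v \<in> V \<and> k \<in> {w \<in> ?W. ?T w = 0}} \<subseteq> ?W"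
        proof
          fix x assume "x \<in> {v + k | v k. v \<in> V \<and> k \<in> {w \<in> ?W. ?T w = 0}}"
          then obtain v k where "x = v + k" "v \<in> V" "k \<in> ?W" by blast
          then show "x \<in> ?W" using adj_add[OF dense, of v Tt0 k] VW by blast
        qed
        show "?W \<subseteq> {v + k | v k. v \<in> V \<and> k \<in> {w \<in> ?W. ?T w = 0}}"
        proof
          fix w assume w: "w \<in> ?W"
          obtain v where v: "v \<in> V" "?T v = ?T w" using img by (metis UNIV_I imageE)
          have vW: "v \<in> ?W" using VW v by blast
          have k: "w - v \<in> ?W \<and> ?T (w - v) = 0" using adj_diff[OF dense w vW] v by simp
          have "w = v + (w - v)" by simp
          then show "w \<in> {v + k | v k. v \<in> V \<and> k \<in> {w \<in> ?W. ?T w = 0}}" using v k by blast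
        qed
      qed
    qed
  next
    assume H: "V \<inter> {w \<in> ?W. ?T w = 0} = {0} \<and> {v + k | v k. v \<in> V \<and> k \<in> {w \<in> ?W. ?T w = 0}} = ?W"
    show "bij_betw ?T V UNIV"
      unfolding bij_betw_def
    proof
      show "inj_on ?T V"
      proof (rule inj_onI)
        fix x y assume x: "x \<in> V" "y \<in> V" "?T x = ?T y"
        have "x - y \<in> V" using Vdiff x by blast
        moreover have "x - y \<in> ?W \<and> ?T (x - y) = 0" using adj_diff[OF dense, of x Tt0 y] VW x by auto
        ultimately have "x - y \<in> V \<inter> {w \<in> ?W. ?T w = 0}" by blast
        then have "x - y \<in> {0}" using conjunct1[OF H] by simp
        then show "x = y" by simp
      qed
      show "?T ` V = UNIV"
      proof
        show "?T ` V \<subseteq> UNIV" by simp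
        show "UNIV \<subseteq> ?T ` V"
        proof
          fix f :: 'a assume "f \<in> UNIV"
          obtain w where w: "w \<in> ?W" "?T w = f" using surjT by blast
          then have "w \<in> {v + k | v k. v \<in> V \<and> k \<in> {w \<in> ?W. ?T w = 0}}" using conjunct2[OF H] by simp
          then obtain v k where vk: "w = v + k" "v \<in> V" "k \<in> ?W" "?T k = 0" by blast
          have "?T w = ?T v + ?T k" using adj_add[OF dense, of v Tt0 k] VW vk by auto
          then have "f = ?T v" using vk w by simp
          then show "f \<in> ?T ` V" by (rule rev_image_eqI[OF vk(2)])
        qed
      qed
    qed
  qed
qed

end
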